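(* Let $(X,d)$ be a complete CAT(0) space and let $(A,B)$ be a pair of nonempty, closed, convex, bounded subsets of $X$ which is proximal. Let $T:A\cup B\to A\cup B$ be a cyclic relatively nonexpansive mapping. Then $T$ is nonexpansive, i.e., $d(Tx,Ty)\le d(x,y)$ for all $x,y\in A\cup B$.
   Context: A CAT(0) space is a geodesic space in which every geodesic triangle satisfies $d(x,y)\le d_{\mathbb{E}^2}(\bar x,\bar y)$ for all points $x,y$ of the triangle and their comparison points in a Euclidean comparison triangle with the same side lengths. $\operatorname{dist}(A,B)=\inf\{d(x,y):x\in A,y\in B\}$. The pair $(A,B)$ is proximal if for every $(a,b)\in A\times B$ there is $(a',b')\in A\times B$ with $d(a,b')=d(a',b)=\operatorname{dist}(A,B)$. $T$ is relatively nonexpansive if $d(Tx,Ty)\le d(x,y)$ for all $x\in A$, $y\in B$, and cyclic if $T(A)\subseteq B$, $T(B)\subseteq A$. *)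

theory Defs
  imports "HOL-Analysis.Analysis"
begin

definition geodesic_path :: "'a::metric_space \<Rightarrow> 'a \<Rightarrow> (real \<Rightarrow> 'a) \<Rightarrow> bool" where
  "geodesic_path x y c \<longleftrightarrow> c 0 = x \<and> c (dist x y) = y \<and>
     (\<forall>s\<in>{0..dist x y}. \<forall>t\<in>{0..dist x y}. dist (c s) (c t) = \<bar>s - t\<bar>)"

definition geodesic_space :: "'a::metric_space itself \<Rightarrow> bool" where
  "geodesic_space TYPE('a) \<longleftrightarrow> (\<forall>x y::'a. \<exists>c. geodesic_path x y c)"

text \<open>x is the point at parameter s of the side c (of length l) and xb is its comparison
  point on the Euclidean segment from P to Q.\<close>
definition on_side :: "(real \<Rightarrow> 'a) \<Rightarrow> real \<Rightarrow> real^2 \<Rightarrow> real^2 \<Rightarrow> 'a \<Rightarrow> real^2 \<Rightarrow> bool" where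
  "on_side c l P Q x xb \<longleftrightarrow> (\<exists>s\<in>{0..l}. x = c s \<and> xb = P + (s / l) *\<^sub>R (Q - P))"

definition CAT0_space :: "'a::metric_space itself \<Rightarrow> bool" where
  "CAT0_space TYPE('a) \<longleftrightarrow> geodesic_space TYPE('a) \<and>
    (\<forall>(p::'a) q r c1 c2 c3 (P::real^2) Q R.
       geodesic_path p q c1 \<and> geodesic_path q r c2 \<and> geodesic_path r p c3 \<and>
       dist P Q = dist p q \<and> dist Q R = dist q r \<and> dist R P = dist r p \<longrightarrow>
       (let cmp = (\<lambda>x xb. on_side c1 (dist p q) P Q x xb \<or> on_side c2 (dist q r) Q R x xb
                         \<or> on_side c3 (dist r p) R P x xb)
        in \<forall>x xb y yb. cmp x xb \<and> cmp y yb \<longrightarrow> dist x y \<le> dist xb yb))"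

definition geod_convex :: "'a::metric_space set \<Rightarrow> bool" where
  "geod_convex A \<longleftrightarrow> (\<forall>x\<in>A. \<forall>y\<in>A. \<forall>c. geodesic_path x y c \<longrightarrow> c ` {0..dist x y} \<subseteq> A)"

definition proximal_pair :: "'a::metric_space set \<Rightarrow> 'a set \<Rightarrow> bool" where
  "proximal_pair A B \<longleftrightarrow> (\<forall>a\<in>A. \<forall>b\<in>B. \<exists>a'\<in>A. \<exists>b'\<in>B.
      dist a b' = setdist A B \<and> dist a' b = setdist A B)"

definition cyclic_map :: "('a \<Rightarrow> 'a) \<Rightarrow> 'a set \<Rightarrow> 'a set \<Rightarrow> bool" where
  "cyclic_map T A B \<longleftrightarrow> T ` A \<subseteq> B \<and> T ` B \<subseteq> A"

definition rel_nonexpansive :: "('a::metric_space \<Rightarrow> 'a) \<Rightarrow> 'a set \<Rightarrow> 'a set \<Rightarrow> bool" where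
  "rel_nonexpansive T A B \<longleftrightarrow> (\<forall>x\<in>A. \<forall>y\<in>B. dist (T x) (T y) \<le> dist x y)"

end

theory Submission
  imports Defs
begin

lemma comp_tri:
  fixes a b c :: real
  assumes "b > 0" "a \<ge> 0" "c \<ge> 0" "a \<le> b + c" "b \<le> a + c" "c \<le> a + b"
  shows "\<exists>P Q R :: real^2. dist P Q = a \<and> dist Q R = b \<and> dist R P = c"
proof -
  define u where "u = (a^2 + b^2 - c^2) / (2*b)"
  have h1: "a^2+b^2-c^2 \<le> 2*a*b"
  proof -
    have "(a-b)^2 \<le> c^2" using assms by (intro power2_le_iff_abs_le[THEN iffD2]) auto
    thus ?thesis by (simp add: power2_eq_square algebra_simps)
  qed
  have h2: "-(2*a*b) \<le> a^2+b^2-c^2"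
  proof -
    have "c^2 \<le> (a+b)^2" using assms by (intro power_mono) auto
    thus ?thesis by (simp add: power2_eq_square algebra_simps)
  qed
  have "\<bar>u\<bar> \<le> a" using h1 h2 assms unfolding u_def by (auto simp: abs_le_iff field_simps)
  hence uu: "u^2 \<le> a^2" using abs_le_square_iff by (metis abs_of_nonneg assms(2)) 
  define v where "v = sqrt (a^2 - u^2)"
  have v2: "v^2 = a^2 - u^2" unfolding v_def using uu by simp
  define e1 :: "real^2" where "e1 = axis 1 1"
  define e2 :: "real^2" where "e2 = axis 2 1"
  have i11: "e1 \<bullet> e1 = 1" "e2 \<bullet> e2 = 1" "e1 \<bullet> e2 = 0" "e2 \<bullet> e1 = 0"
    unfolding e1_def e2_def by (auto simp: inner_axis_axis)
  define P where "P = u *\<^sub>R e1 + v *\<^sub>R e2"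
  define R where "R = b *\<^sub>R e1"
  have "(dist P 0)^2 = a^2"
    unfolding dist_norm power2_norm_eq_inner P_def using v2
    by (simp add: inner_add inner_diff i11 power2_eq_square algebra_simps)
  hence d1: "dist P 0 = a" using assms by (simp add: power2_eq_iff_nonneg)
  have "(dist 0 R)^2 = b^2"
    unfolding dist_norm power2_norm_eq_inner R_def
    by (simp add: inner_add inner_diff i11 power2_eq_square algebra_simps)
  hence d2: "dist 0 R = b" using assms by (simp add: power2_eq_iff_nonneg)
  have "(dist R P)^2 = b^2 - 2*b*u + a^2"
    unfolding dist_norm power2_norm_eq_inner R_def P_def using v2
    by (simp add: inner_add inner_diff i11 power2_eq_square algebra_simps)
  also have "\<dots> = c^2" unfolding u_def using assms by (simp add: field_simps)
  finally have d3: "dist R P = c" using assms by (simp add: power2_eq_iff_nonneg)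
  show ?thesis using d1 d2 d3 by blast
qed

lemma eucl_id:
  fixes P Q R :: "'b::real_inner" and t :: real
  shows "(dist P (Q + t *\<^sub>R (R - Q)))^2 = (1-t)*(dist P Q)^2 + t*(dist P R)^2 - t*(1-t)*(dist Q R)^2"
  unfolding dist_norm power2_norm_eq_inner
  by (simp add: inner_add inner_diff inner_commute power2_eq_square algebra_simps)

lemma CN:
  fixes x y z :: "'a::metric_space"
  assumes cat: "CAT0_space TYPE('a)" and g: "geodesic_path y z c" and t: "0 \<le> t" "t \<le> 1"
  shows "(dist x (c (t * dist y z)))^2 \<le> (1-t)*(dist x y)^2 + t*(dist x z)^2 - t*(1-t)*(dist y z)^2"
proof (cases "y = z")
  case True
  then have "c 0 = y" using g unfolding geodesic_path_def by simp
  then show ?thesis using True by (simp add: algebra_simps)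
next
  case False
  hence bpos: "dist y z > 0" by simp
  have geo: "geodesic_space TYPE('a)" and cmpax: "\<forall>(p::'a) q r c1 c2 c3 (P::real^2) Q R.
       geodesic_path p q c1 \<and> geodesic_path q r c2 \<and> geodesic_path r p c3 \<and>
       dist P Q = dist p q \<and> dist Q R = dist q r \<and> dist R P = dist r p \<longrightarrow>
       (let cmp = (\<lambda>x xb. on_side c1 (dist p q) P Q x xb \<or> on_side c2 (dist q r) Q R x xb
                         \<or> on_side c3 (dist r p) R P x xb)
        in \<forall>x xb y yb. cmp x xb \<and> cmp y yb \<longrightarrow> dist x y \<le> dist xb yb)"
    using cat unfolding CAT0_space_def by auto
  obtain c1 where c1: "geodesic_path x y c1" using geo unfolding geodesic_space_def by blast
  obtain c3 where c3: "geodesic_path z x c3" using geo unfolding geodesic_space_def by blast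
  obtain P Q R :: "real^2" where PQR: "dist P Q = dist x y" "dist Q R = dist y z" "dist R P = dist z x"
    using comp_tri[of "dist y z" "dist x y" "dist z x"] bpos
    by (metis dist_commute dist_triangle zero_le_dist add.commute)
  have main: "let cmp = (\<lambda>xa xb. on_side c1 (dist x y) P Q xa xb \<or> on_side c (dist y z) Q R xa xb
                         \<or> on_side c3 (dist z x) R P xa xb)
        in \<forall>xa xb ya yb. cmp xa xb \<and> cmp ya yb \<longrightarrow> dist xa ya \<le> dist xb yb"
    using cmpax c1 g c3 PQR by blast
  have s1: "on_side c1 (dist x y) P Q x P"
    unfolding on_side_def using c1 unfolding geodesic_path_def by (intro bexI[of _ 0]) auto
  have s2: "on_side c (dist y z) Q R (c (t * dist y z)) (Q + t *\<^sub>R (R - Q))"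
    unfolding on_side_def using bpos t by (intro bexI[of _ "t * dist y z"]) (auto simp: mult_le_cancel_right1)
  have "dist x (c (t * dist y z)) \<le> dist P (Q + t *\<^sub>R (R - Q))"
    using main s1 s2 unfolding Let_def by blast
  hence "(dist x (c (t * dist y z)))^2 \<le> (dist P (Q + t *\<^sub>R (R - Q)))^2"
    by (simp add: power_mono)
  also have "\<dots> = (1-t)*(dist x y)^2 + t*(dist x z)^2 - t*(1-t)*(dist y z)^2"
    unfolding eucl_id using PQR by (simp add: dist_commute)
  finally show ?thesis .
qed

lemma alg: fixes p q r t :: real
  assumes "p \<le> (1-t)*p + t*q - t*(1-t)*r" shows "t * p \<le> t * (q - r + t * r)"
  using assms by (simp add: algebra_simps)

lemma small_t:
  fixes X Y Z :: real
  assumes Z: "Z \<ge> 0" and h: "\<And>t. 0 < t \<Longrightarrow> t \<le> 1 \<Longrightarrow> X \<le> Y + t * Z"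
  shows "X \<le> Y"
proof (rule ccontr)
  assume "\<not> X \<le> Y"
  hence e: "X - Y > 0" by simp
  define t where "t = min 1 ((X - Y) / (2*Z + 1))"
  have t0: "t > 0" "t \<le> 1" unfolding t_def using e Z by auto
  have "t * Z \<le> (X - Y) / (2*Z + 1) * Z" unfolding t_def using Z by (intro mult_right_mono) auto
  also have "\<dots> < X - Y"
  proof -
    have "Z / (2*Z+1) < 1" using Z by simp
    hence "(X - Y) * (Z / (2*Z+1)) < (X - Y) * 1" using e by (intro mult_strict_left_mono) auto
    thus ?thesis by simp
  qed
  finally show False using h[OF t0] by simp
qed

lemma proj:
  fixes a b c :: "'a::metric_space"
  assumes cat: "CAT0_space TYPE('a)" and conv: "geod_convex B" and a: "a \<in> B" and c: "c \<in> B"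
    and near: "\<And>z. z \<in> B \<Longrightarrow> dist a b \<le> dist z b"
  shows "(dist c b)^2 \<ge> (dist c a)^2 + (dist a b)^2"
proof -
  have geo: "geodesic_space TYPE('a)" using cat unfolding CAT0_space_def by auto
  obtain g where g: "geodesic_path a c g" using geo unfolding geodesic_space_def by blast
  have "(dist a b)^2 \<le> ((dist c b)^2 - (dist c a)^2) + t * (dist a c)^2" if t: "0 < t" "t \<le> 1" for t
  proof -
    have "t * dist a c \<le> 1 * dist a c" using t by (intro mult_right_mono) auto
    hence "t * dist a c \<in> {0..dist a c}" using t by auto
    hence mB: "g (t * dist a c) \<in> B" using conv a c g unfolding geod_convex_def by blast
    have "dist a b \<le> dist b (g (t * dist a c))" using near[OF mB] by (simp add: dist_commute)
    hence "(dist a b)^2 \<le> (dist b (g (t * dist a c)))^2" by (simp add: power_mono)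
    also have "\<dots> \<le> (1-t)*(dist b a)^2 + t*(dist b c)^2 - t*(1-t)*(dist a c)^2"
      using CN[OF cat g] t by simp
    finally have "(dist a b)^2 \<le> (1-t)*(dist a b)^2 + t*(dist c b)^2 - t*(1-t)*(dist a c)^2"
      by (simp add: dist_commute)
    hence "t * (dist a b)^2 \<le> t * ((dist c b)^2 - (dist a c)^2 + t * (dist a c)^2)"
      by (rule alg)
    hence "t * (dist a b)^2 \<le> t * ((dist c b)^2 - (dist c a)^2 + t * (dist a c)^2)"
      by (simp only: dist_commute)
    thus ?thesis using t(1) by (simp only: mult_le_cancel_left_pos)
  qed
  hence "(dist a b)^2 \<le> (dist c b)^2 - (dist c a)^2"
    using small_t[of "(dist a c)^2" "(dist a b)^2" "(dist c b)^2 - (dist c a)^2"] by simp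
  thus ?thesis by simp
qed

lemma quad:
  fixes x y z w :: "'a::metric_space"
  assumes cat: "CAT0_space TYPE('a)"
  shows "(dist x z)^2 + (dist y w)^2 \<le> (dist x y)^2 + (dist y z)^2 + (dist z w)^2 + (dist w x)^2"
proof -
  have geo: "geodesic_space TYPE('a)" using cat unfolding CAT0_space_def by auto
  obtain g where g: "geodesic_path x z g" using geo unfolding geodesic_space_def by blast
  define m where "m = g ((1/2) * dist x z)"
  have 1: "(dist y m)^2 \<le> (1/2)*(dist y x)^2 + (1/2)*(dist y z)^2 - (1/4)*(dist x z)^2"
    using CN[OF cat g, of "1/2" y] unfolding m_def by simp
  have 2: "(dist w m)^2 \<le> (1/2)*(dist w x)^2 + (1/2)*(dist w z)^2 - (1/4)*(dist x z)^2"
    using CN[OF cat g, of "1/2" w] unfolding m_def by simp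
  have "dist y w \<le> dist y m + dist w m" by (metis dist_commute dist_triangle)
  hence "(dist y w)^2 \<le> (dist y m + dist w m)^2" by (simp add: power_mono)
  also have "\<dots> \<le> 2 * ((dist y m)^2 + (dist w m)^2)"
  proof -
    have "0 \<le> (dist y m - dist w m)^2" by simp
    thus ?thesis by (simp add: power2_eq_square algebra_simps)
  qed
  finally show ?thesis using 1 2 by (simp add: dist_commute)
qed

lemma core:
  fixes A B :: "'a::metric_space set" and T :: "'a \<Rightarrow> 'a"
  assumes cat: "CAT0_space TYPE('a)" and convB: "geod_convex B"
    and xA: "x \<in> A" and yA: "y \<in> A" and x'B: "x' \<in> B" and y'B: "y' \<in> B"
    and hx: "dist x x' = setdist A B" and hy: "dist y y' = setdist A B"
    and TA: "\<forall>u\<in>A. T u \<in> B" and TB: "\<forall>u\<in>B. T u \<in> A"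
    and rel: "\<forall>u\<in>A. \<forall>v\<in>B. dist (T u) (T v) \<le> dist u v"
  shows "dist (T x) (T y) \<le> dist x y"
proof -
  define D where "D = setdist A B"
  have lb: "\<And>u v. u \<in> A \<Longrightarrow> v \<in> B \<Longrightarrow> D \<le> dist u v"
    unfolding D_def by (rule setdist_le_dist)
  have TxB: "T x \<in> B" "T y \<in> B" using TA xA yA by auto
  have Tx'A: "T x' \<in> A" "T y' \<in> A" using TB x'B y'B by auto
  have Txx: "dist (T x) (T x') = D"
  proof -
    have "dist (T x) (T x') \<le> dist x x'" using rel xA x'B by blast
    hence "dist (T x) (T x') \<le> D" using hx unfolding D_def by simp
    moreover have "D \<le> dist (T x') (T x)" using lb Tx'A TxB by auto
    ultimately show ?thesis by (simp add: dist_commute)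
  qed
  have Tyy: "dist (T y) (T y') = D"
  proof -
    have "dist (T y) (T y') \<le> dist y y'" using rel yA y'B by blast
    hence "dist (T y) (T y') \<le> D" using hy unfolding D_def by simp
    moreover have "D \<le> dist (T y') (T y)" using lb Tx'A TxB by auto
    ultimately show ?thesis by (simp add: dist_commute)
  qed
  have p1: "(dist (T x) (T y'))^2 \<ge> (dist (T x) (T y))^2 + (dist (T y) (T y'))^2"
  proof (rule proj[OF cat convB TxB(2) TxB(1)])
    fix z assume "z \<in> B"
    thus "dist (T y) (T y') \<le> dist z (T y')" using Tyy lb[of "T y'" z] Tx'A by (simp add: dist_commute)
  qed
  have p2: "(dist (T y) (T x'))^2 \<ge> (dist (T y) (T x))^2 + (dist (T x) (T x'))^2"
  proof (rule proj[OF cat convB TxB(1) TxB(2)])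
    fix z assume "z \<in> B"
    thus "dist (T x) (T x') \<le> dist z (T x')" using Txx lb[of "T x'" z] Tx'A by (simp add: dist_commute)
  qed
  have p3: "(dist y' x)^2 \<ge> (dist y' x')^2 + (dist x' x)^2"
  proof (rule proj[OF cat convB x'B y'B])
    fix z assume "z \<in> B"
    thus "dist x' x \<le> dist z x" using hx lb[of x z] xA unfolding D_def by (simp add: dist_commute)
  qed
  have p4: "(dist x' y)^2 \<ge> (dist x' y')^2 + (dist y' y)^2"
  proof (rule proj[OF cat convB y'B x'B])
    fix z assume "z \<in> B"
    thus "dist y' y \<le> dist z y" using hy lb[of y z] yA unfolding D_def by (simp add: dist_commute)
  qed
  have q: "(dist x y')^2 + (dist y x')^2 \<le> (dist x y)^2 + (dist y y')^2 + (dist y' x')^2 + (dist x' x)^2"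
    by (rule quad[OF cat])
  have r1: "(dist (T x) (T y'))^2 \<le> (dist x y')^2"
    using rel xA y'B by (simp add: power_mono)
  have r2: "(dist (T y) (T x'))^2 \<le> (dist y x')^2"
    using rel yA x'B by (simp add: power_mono)
  have c1: "dist y' x = dist x y'" "dist x' y = dist y x'" "dist y' x' = dist x' y'"
    "dist x' x = D" "dist y' y = D" "dist y y' = D" "dist (T y) (T x) = dist (T x) (T y)"
    using hx hy unfolding D_def by (auto simp: dist_commute)
  have "(dist x' y')^2 \<le> (dist x y)^2"
    using p3 p4 q unfolding c1 by linarith
  hence "(dist (T x) (T y))^2 \<le> (dist x y)^2"
    using p1 p2 q r1 r2 unfolding c1 Txx Tyy by linarith
  thus ?thesis by (rule power2_le_imp_le) simp
qed

theorem mainTheorem11: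
  fixes A B :: "'a::complete_space set" and T :: "'a \<Rightarrow> 'a"
  assumes "CAT0_space TYPE('a)"
    and "A \<noteq> {}" "B \<noteq> {}" "closed A" "closed B" "geod_convex A" "geod_convex B"
    and "bounded A" "bounded B"
    and "proximal_pair A B"
    and "cyclic_map T A B"
    and "rel_nonexpansive T A B"
  shows "\<forall>x\<in>A \<union> B. \<forall>y\<in>A \<union> B. dist (T x) (T y) \<le> dist x y"
proof (intro ballI)
  note cat = assms(1)
  have TA: "\<forall>u\<in>A. T u \<in> B" and TB: "\<forall>u\<in>B. T u \<in> A"
    using assms(11) unfolding cyclic_map_def by auto
  have rel: "\<forall>u\<in>A. \<forall>v\<in>B. dist (T u) (T v) \<le> dist u v"
    using assms(12) unfolding rel_nonexpansive_def by auto
  have rel': "\<forall>u\<in>B. \<forall>v\<in>A. dist (T u) (T v) \<le> dist u v"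
    using rel by (metis dist_commute)
  have prox: "\<forall>a\<in>A. \<forall>b\<in>B. \<exists>a'\<in>A. \<exists>b'\<in>B. dist a b' = setdist A B \<and> dist a' b = setdist A B"
    using assms(10) unfolding proximal_pair_def by auto
  obtain a0 where a0: "a0 \<in> A" using assms(2) by blast
  obtain b0 where b0: "b0 \<in> B" using assms(3) by blast
  have pA: "\<exists>x'\<in>B. dist x x' = setdist A B" if "x \<in> A" for x
    using prox that b0 by blast
  have pB: "\<exists>x'\<in>A. dist x x' = setdist B A" if "x \<in> B" for x
    using prox that a0 by (metis dist_commute setdist_sym)
  fix x y assume x: "x \<in> A \<union> B" and y: "y \<in> A \<union> B"
  show "dist (T x) (T y) \<le> dist x y"
  proof (cases "x \<in> A")
    case xA: True
    show ?thesis
    proof (cases "y \<in> A")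
      case yA: True
      obtain x' where "x' \<in> B" "dist x x' = setdist A B" using pA[OF xA] by blast
      moreover obtain y' where "y' \<in> B" "dist y y' = setdist A B" using pA[OF yA] by blast
      ultimately show ?thesis using core[OF cat assms(7) xA yA _ _ _ _ TA TB rel] by blast
    next
      case False
      hence "y \<in> B" using y by blast
      thus ?thesis using rel xA by blast
    qed
  next
    case False
    hence xB: "x \<in> B" using x by blast
    show ?thesis
    proof (cases "y \<in> B")
      case yB: True
      obtain x' where "x' \<in> A" "dist x x' = setdist B A" using pB[OF xB] by blast
      moreover obtain y' where "y' \<in> A" "dist y y' = setdist B A" using pB[OF yB] by blast
      ultimately show ?thesis using core[OF cat assms(6) xB yB _ _ _ _ TB TA rel'] by blast
    next
      case False
      hence "y \<in> A" using y by blast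
      thus ?thesis using rel' xB by blast
    qed
  qed
qed

end
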